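(* Let $G$ be a $2K_2$-free graph and let $X$ be a minimal dominating set of $G$ with $|X|>\alpha(G)$. Then there is a triangle $T$ (a set of three pairwise adjacent vertices) with $T\subseteq X$ such that $X=T\cup A(T)$, where $A(T)$ is the set of vertices outside $T$ having no neighbour in $T$.
   Context: All graphs are finite, simple and undirected. $2K_2$-free means no induced subgraph isomorphic to the disjoint union of two edges. $\alpha(G)$ is the maximum size of an independent set of $G$. A dominating set is a vertex set $D$ such that every vertex outside $D$ has a neighbour in $D$; it is minimal if no proper subset is dominating. *)

theory Defs
  imports Main
begin

definition simple_graph :: "'a set \<Rightarrow> ('a \<Rightarrow> 'a \<Rightarrow> bool) \<Rightarrow> bool" where
  "simple_graph V E \<longleftrightarrow> finite V \<and> (\<forall>x y. E x y \<longrightarrow> x \<in> V \<and> y \<in> V)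
     \<and> (\<forall>x y. E x y \<longrightarrow> E y x) \<and> (\<forall>x. \<not> E x x)"

definition two_K2_free :: "'a set \<Rightarrow> ('a \<Rightarrow> 'a \<Rightarrow> bool) \<Rightarrow> bool" where
  "two_K2_free V E \<longleftrightarrow> \<not> (\<exists>a\<in>V. \<exists>b\<in>V. \<exists>c\<in>V. \<exists>d\<in>V.
     distinct [a, b, c, d] \<and> E a b \<and> E c d \<and>
     \<not> E a c \<and> \<not> E a d \<and> \<not> E b c \<and> \<not> E b d)"

definition independent_set :: "'a set \<Rightarrow> ('a \<Rightarrow> 'a \<Rightarrow> bool) \<Rightarrow> 'a set \<Rightarrow> bool" where
  "independent_set V E S \<longleftrightarrow> S \<subseteq> V \<and> (\<forall>x\<in>S. \<forall>y\<in>S. \<not> E x y)"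

definition alpha :: "'a set \<Rightarrow> ('a \<Rightarrow> 'a \<Rightarrow> bool) \<Rightarrow> nat" where
  "alpha V E = Max (card ` {S. independent_set V E S})"

definition dominating_set :: "'a set \<Rightarrow> ('a \<Rightarrow> 'a \<Rightarrow> bool) \<Rightarrow> 'a set \<Rightarrow> bool" where
  "dominating_set V E D \<longleftrightarrow> D \<subseteq> V \<and> (\<forall>v\<in>V - D. \<exists>u\<in>D. E v u)"

definition minimal_dominating_set :: "'a set \<Rightarrow> ('a \<Rightarrow> 'a \<Rightarrow> bool) \<Rightarrow> 'a set \<Rightarrow> bool" where
  "minimal_dominating_set V E D \<longleftrightarrow> dominating_set V E D \<and>
     (\<forall>D'. D' \<subset> D \<longrightarrow> \<not> dominating_set V E D')"

definition triangle :: "'a set \<Rightarrow> ('a \<Rightarrow> 'a \<Rightarrow> bool) \<Rightarrow> 'a set \<Rightarrow> bool" where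
  "triangle V E T \<longleftrightarrow> T \<subseteq> V \<and> card T = 3 \<and> (\<forall>x\<in>T. \<forall>y\<in>T. x \<noteq> y \<longrightarrow> E x y)"

definition anti_nbhd :: "'a set \<Rightarrow> ('a \<Rightarrow> 'a \<Rightarrow> bool) \<Rightarrow> 'a set \<Rightarrow> 'a set" where
  "anti_nbhd V E T = {v \<in> V - T. \<forall>t\<in>T. \<not> E v t}"

end

theory Submission
  imports Defs
begin

lemma two_elems: "finite A \<Longrightarrow> 2 \<le> card A \<Longrightarrow> \<exists>s\<in>A. \<exists>t\<in>A. s \<noteq> t"
  by (metis One_nat_def card_le_Suc0_iff_eq not_less_eq_eq numeral_2_eq_2)

lemma four_case:
  assumes one: "\<forall>a\<in>Y. \<forall>b\<in>Y. a \<noteq> b \<longrightarrow> R a b \<or> Q a b"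
  and i: "\<forall>a\<in>Y. \<forall>b\<in>Y. \<forall>c\<in>Y. \<forall>d\<in>Y. distinct [a,b,c,d] \<longrightarrow> R a b \<longrightarrow> Q c d \<longrightarrow> False"
  and ii: "\<forall>a\<in>Y. \<forall>b\<in>Y. \<forall>c\<in>Y. \<forall>d\<in>Y. distinct [a,b,c,d] \<longrightarrow> Q a b \<longrightarrow> Q c d \<longrightarrow>
          \<not> Q a c \<longrightarrow> \<not> Q a d \<longrightarrow> \<not> Q b c \<longrightarrow> \<not> Q b d \<longrightarrow> False"
  and iii: "\<forall>a\<in>Y. \<forall>b\<in>Y. \<forall>c\<in>Y. \<forall>d\<in>Y. distinct [a,b,c,d] \<longrightarrow> R a b \<longrightarrow> R c d \<longrightarrow>
          \<not> R a c \<longrightarrow> \<not> R a d \<longrightarrow> \<not> R b c \<longrightarrow> \<not> R b d \<longrightarrow> False"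
  and Rs: "\<forall>a b. R a b \<longrightarrow> R b a" and Qs: "\<forall>a b. Q a b \<longrightarrow> Q b a"
  and Y: "u \<in> Y" "v \<in> Y" "s \<in> Y" "t \<in> Y" and d: "distinct [u,v,s,t]"
  and Quv: "Q u v" and Rus: "R u s"
  shows False
proof -
  have d2: "distinct [u,s,v,t]" "distinct [v,t,u,s]" "distinct [s,t,u,v]" "distinct [u,v,s,t]"
    "distinct [u,t,v,s]" "distinct [s,v,u,t]" "distinct [v,s,u,t]" using d by auto
  have "\<not> Q v t" using i Y d2 Rus by blast
  hence Rvt: "R v t" using one Y d by auto
  have nQus: "\<not> Q u s" using i Y d2 Rvt by blast
  have "\<not> R s t" using i Y d2 Quv by blast
  hence Qst: "Q s t" using one Y d by auto
  have nRuv: "\<not> R u v" using i Y d2 Qst by blast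
  have "\<not> R s t" using i Y d2 Quv by blast
  have "R u t \<or> R s v" using iii Y d2 Rus Rvt nRuv \<open>\<not> R s t\<close> by blast
  hence both: "R u t \<and> R v s"
  proof
    assume a: "R u t"
    have "\<not> Q v s" using i Y d2 a by blast
    thus ?thesis using one Y d a by auto
  next
    assume a: "R s v"
    have "\<not> Q u t" using i Y d2 a by blast
    thus ?thesis using one Y d a Rs by auto
  qed
  have "\<not> Q u t" using i Y d2 both by blast
  moreover have "\<not> Q v s" using i Y d2 both by blast
  moreover have "\<not> Q v t" using i Y d2 Rus by blast
  ultimately show False using ii Y d2 Quv Qst nQus by blast
qed

lemma comb:
  assumes fin: "finite Y"
  and Ri: "\<forall>a. \<not> R a a" and Qi: "\<forall>a. \<not> Q a a"
  and one: "\<forall>a\<in>Y. \<forall>b\<in>Y. a \<noteq> b \<longrightarrow> R a b \<or> Q a b"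
  and i: "\<forall>a\<in>Y. \<forall>b\<in>Y. \<forall>c\<in>Y. \<forall>d\<in>Y. distinct [a,b,c,d] \<longrightarrow> R a b \<longrightarrow> Q c d \<longrightarrow> False"
  and ii: "\<forall>a\<in>Y. \<forall>b\<in>Y. \<forall>c\<in>Y. \<forall>d\<in>Y. distinct [a,b,c,d] \<longrightarrow> Q a b \<longrightarrow> Q c d \<longrightarrow>
          \<not> Q a c \<longrightarrow> \<not> Q a d \<longrightarrow> \<not> Q b c \<longrightarrow> \<not> Q b d \<longrightarrow> False"
  and iii: "\<forall>a\<in>Y. \<forall>b\<in>Y. \<forall>c\<in>Y. \<forall>d\<in>Y. distinct [a,b,c,d] \<longrightarrow> R a b \<longrightarrow> R c d \<longrightarrow>
          \<not> R a c \<longrightarrow> \<not> R a d \<longrightarrow> \<not> R b c \<longrightarrow> \<not> R b d \<longrightarrow> False"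
  and Rs: "\<forall>a b. R a b \<longrightarrow> R b a" and Qs: "\<forall>a b. Q a b \<longrightarrow> Q b a"
  and nb: "\<forall>a\<in>Y. \<exists>b\<in>Y. R a b"
  and NP: "\<forall>A\<subseteq>Y. (\<forall>a\<in>A. \<forall>b\<in>A. \<not> R a b) \<longrightarrow> (\<exists>a\<in>Y-A. \<exists>b\<in>Y-A. Q a b)"
  shows "card Y = 3 \<and> (\<forall>a\<in>Y. \<forall>b\<in>Y. a \<noteq> b \<longrightarrow> R a b)"
proof -
  have "Y \<noteq> {}" using NP[rule_format, of "{}"] by auto
  then obtain y0 where y0: "y0 \<in> Y" by auto
  have c1: "card Y \<noteq> 1"
  proof
    assume "card Y = 1"
    then obtain z where "Y = {z}" using card_1_singletonE by blast
    thus False using nb Ri by auto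
  qed
  have c2: "card Y \<noteq> 2"
  proof
    assume "card Y = 2"
    then obtain a b where ab: "Y = {a,b}" "a \<noteq> b" by (meson card_2_iff)
    have "\<exists>x\<in>Y-{a}. \<exists>y\<in>Y-{a}. Q x y" using NP[rule_format, of "{a}"] ab Ri by auto
    thus False using ab Qi by auto
  qed
  have c4: "\<not> card Y \<ge> 4"
  proof
    assume c: "card Y \<ge> 4"
    have "\<exists>x\<in>Y-{y0}. \<exists>y\<in>Y-{y0}. Q x y" using NP[rule_format, of "{y0}"] y0 Ri by auto
    then obtain u v where uv: "u \<in> Y" "v \<in> Y" "Q u v" by auto
    have uv2: "u \<noteq> v" using uv Qi by auto
    have cuv: "card (Y - {u,v}) \<ge> 2" using c fin uv uv2
    proof -
      have "card (Y - {u,v}) = card Y - card {u,v}" using uv fin by (intro card_Diff_subset) auto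
      thus ?thesis using uv2 c by simp
    qed
    have Qo: "Q x y" if "x \<in> Y - {u,v}" "y \<in> Y - {u,v}" "x \<noteq> y" for x y
    proof -
      have "distinct [x,y,u,v]" using that uv2 by auto
      hence "\<not> R x y" using i that uv by blast
      thus ?thesis using one that by auto
    qed
    obtain s t where st: "s \<in> Y - {u,v}" "t \<in> Y - {u,v}" "s \<noteq> t"
      using two_elems[OF _ cuv] fin by blast
    obtain b where b: "b \<in> Y" "R u b" using nb uv by blast
    have bu: "b \<noteq> u" using b Ri by auto
    have bv: "b \<noteq> v"
    proof
      assume "b = v"
      moreover have "distinct [u,v,s,t]" using st uv2 by auto
      ultimately show False using i uv st b Qo[OF st] by blast
    qed
    show False
    proof (cases "card Y = 4")
      case True
      have sub: "{u,v,s,t} \<subseteq> Y" using uv st by auto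
      have "card {u,v,s,t} = 4" using st uv2 by auto
      hence "{u,v,s,t} = Y" using card_subset_eq[OF fin sub] True by simp
      hence "b = s \<or> b = t" using b bu bv by auto
      thus False
      proof
        assume "b = s"
        thus False using four_case[OF one i ii iii Rs Qs, of u v s t] uv st uv2 b by auto
      next
        assume "b = t"
        thus False using four_case[OF one i ii iii Rs Qs, of u v t s] uv st uv2 b by auto
      qed
    next
      case False
      hence c5: "card Y \<ge> 5" using c by simp
      have "card (Y - {u,v,b}) = card Y - card {u,v,b}" using uv b fin by (intro card_Diff_subset) auto
      hence "card (Y - {u,v,b}) \<ge> 2" using uv2 bu bv c5 by simp
      then obtain s' t' where st': "s' \<in> Y - {u,v,b}" "t' \<in> Y - {u,v,b}" "s' \<noteq> t'"
        using two_elems fin by (meson finite_Diff)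
      have "Q s' t'" using Qo st' by auto
      moreover have "distinct [u,b,s',t']" using st' bu by auto
      ultimately show False using i uv b st' by blast
    qed
  qed
  have c3: "card Y = 3" using c1 c2 c4 \<open>Y \<noteq> {}\<close> fin
  proof -
    have "card Y \<noteq> 0" using \<open>Y \<noteq> {}\<close> fin by simp
    thus ?thesis using c1 c2 c4 by linarith
  qed
  have "\<forall>a\<in>Y. \<forall>b\<in>Y. a \<noteq> b \<longrightarrow> R a b"
  proof (intro ballI impI, rule ccontr)
    fix a b assume ab: "a \<in> Y" "b \<in> Y" "a \<noteq> b" "\<not> R a b"
    have "\<forall>x\<in>{a,b}. \<forall>y\<in>{a,b}. \<not> R x y" using ab Ri Rs by auto
    then obtain x y where xy: "x \<in> Y - {a,b}" "y \<in> Y - {a,b}" "Q x y" using NP[rule_format, of "{a,b}"] ab by auto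
    have "card (Y - {a,b}) = card Y - card {a,b}" using ab fin by (intro card_Diff_subset) auto
    hence "card (Y - {a,b}) = 1" using c3 ab by simp
    then obtain z where "Y - {a,b} = {z}" using card_1_singletonE by blast
    thus False using xy Qi by auto
  qed
  thus ?thesis using c3 by simp
qed


lemma indS_aux:
  fixes p :: "'a \<Rightarrow> 'a"
  assumes IAX: "I \<union> A \<subseteq> X"
  and c1: "\<And>u w. u \<in> I \<union> A \<Longrightarrow> w \<in> I \<union> A \<Longrightarrow> \<not> E u w"
  and nb: "\<And>w b. w \<in> I \<union> A \<Longrightarrow> b \<in> Y - A \<Longrightarrow> w \<noteq> b"
  and pn: "\<And>b w. b \<in> Y \<Longrightarrow> w \<in> X \<Longrightarrow> w \<noteq> b \<Longrightarrow> \<not> E (p b) w"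
  and pn': "\<And>b w. b \<in> Y \<Longrightarrow> w \<in> X \<Longrightarrow> w \<noteq> b \<Longrightarrow> \<not> E w (p b)"
  and nex: "\<not> (\<exists>a\<in>Y-A. \<exists>b\<in>Y-A. E (p a) (p b))"
  and xc: "x \<in> I \<union> A \<or> (\<exists>a\<in>Y - A. x = p a)"
  and yc: "y \<in> I \<union> A \<or> (\<exists>a\<in>Y - A. y = p a)"
  shows "\<not> E x y"
      proof (cases "x \<in> I \<union> A")
        case xT: True
        show ?thesis
        proof (cases "y \<in> I \<union> A")
          case True thus ?thesis by (rule c1[OF xT])
        next
          case False
          then obtain b where b: "b \<in> Y - A" "y = p b" using yc by blast
          have bY: "b \<in> Y" using b(1) by simp
          have "x \<in> X" using xT IAX by (rule subsetD[rotated])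
          from pn'[OF bY this nb[OF xT b(1)]] show ?thesis by (simp add: b(2))
        qed
      next
        case xF: False
        then obtain a where a: "a \<in> Y - A" "x = p a" using xc by blast
        have aY: "a \<in> Y" using a(1) by simp
        show ?thesis
        proof (cases "y \<in> I \<union> A")
          case True
          have "y \<in> X" using True IAX by (rule subsetD[rotated])
          from pn[OF aY this nb[OF True a(1)]] show ?thesis by (simp add: a(2))
        next
          case False
          then obtain b where b: "b \<in> Y - A" "y = p b" using yc by blast
          have "\<not> E (p a) (p b)" using nex a(1) b(1) by blast
          thus ?thesis by (simp add: a(2) b(2))
        qed
      qed

theorem corollary5p3:
  fixes V :: "'a set" and E :: "'a \<Rightarrow> 'a \<Rightarrow> bool" and X :: "'a set"
  assumes "simple_graph V E"
    and "two_K2_free V E"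
    and "minimal_dominating_set V E X"
    and "card X > alpha V E"
  shows "\<exists>T. triangle V E T \<and> T \<subseteq> X \<and> X = T \<union> anti_nbhd V E T"
proof -
  have finV: "finite V" and Ein: "\<forall>x y. E x y \<longrightarrow> x \<in> V \<and> y \<in> V"
    and Es: "\<forall>x y. E x y \<longrightarrow> E y x" and Ei: "\<forall>x. \<not> E x x"
    using assms(1) unfolding simple_graph_def by auto
  have XV: "X \<subseteq> V" and domX: "\<forall>v\<in>V - X. \<exists>u\<in>X. E v u"
    and minl: "\<forall>D'. D' \<subset> X \<longrightarrow> \<not> dominating_set V E D'"
    using assms(3) unfolding minimal_dominating_set_def dominating_set_def by auto
  have finX: "finite X" using XV finV finite_subset by blast
  have K: "False" if "a \<in> V" "b \<in> V" "c \<in> V" "d \<in> V" "distinct [a,b,c,d]" "E a b" "E c d"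
    "\<not> E a c" "\<not> E a d" "\<not> E b c" "\<not> E b d" for a b c d
    using assms(2) that unfolding two_K2_free_def by blast
  define I where "I = {x\<in>X. \<forall>x'\<in>X. \<not> E x x'}"
  define Y where "Y = X - I"
  have IX: "I \<subseteq> X" and YX: "Y \<subseteq> X" unfolding I_def Y_def by auto
  have finY: "finite Y" using finX YX finite_subset by blast
  have priv: "\<exists>q. q \<in> V \<and> q \<notin> X \<and> E q y \<and> (\<forall>x\<in>X. x \<noteq> y \<longrightarrow> \<not> E q x)" if y: "y \<in> Y" for y
  proof -
    have "X - {y} \<subset> X" using y YX by auto
    hence "\<not> dominating_set V E (X - {y})" using minl by blast
    then obtain v where v: "v \<in> V" "v \<notin> X - {y}" "\<forall>u\<in>X - {y}. \<not> E v u"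
      using XV unfolding dominating_set_def by auto
    show ?thesis
    proof (cases "v = y")
      case True
      hence "y \<in> I" using v y YX Ei unfolding I_def by auto
      thus ?thesis using y unfolding Y_def by auto
    next
      case False
      hence vX: "v \<notin> X" using v by auto
      then obtain u where "u \<in> X" "E v u" using domX v by auto
      hence "u = y" using v by auto
      thus ?thesis using v vX \<open>E v u\<close> by auto
    qed
  qed
  define p where "p = (\<lambda>y. SOME q. q \<in> V \<and> q \<notin> X \<and> E q y \<and> (\<forall>x\<in>X. x \<noteq> y \<longrightarrow> \<not> E q x))"
  have p: "\<forall>y\<in>Y. p y \<in> V \<and> p y \<notin> X \<and> E (p y) y \<and> (\<forall>x\<in>X. x \<noteq> y \<longrightarrow> \<not> E (p y) x)"
  proof
    fix y assume "y \<in> Y"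
    from someI_ex[OF priv[OF this]] show "p y \<in> V \<and> p y \<notin> X \<and> E (p y) y \<and> (\<forall>x\<in>X. x \<noteq> y \<longrightarrow> \<not> E (p y) x)"
      unfolding p_def by simp
  qed
  have pV: "\<And>y. y \<in> Y \<Longrightarrow> p y \<in> V" using p by blast
  have pnX: "\<And>y. y \<in> Y \<Longrightarrow> p y \<notin> X" using p by blast
  have pE: "\<And>y. y \<in> Y \<Longrightarrow> E (p y) y" using p by blast
  have pP: "\<And>y x. y \<in> Y \<Longrightarrow> x \<in> X \<Longrightarrow> x \<noteq> y \<Longrightarrow> \<not> E (p y) x" using p by blast
  have pinj: "inj_on p Y"
  proof (rule inj_onI)
    fix y z assume "y \<in> Y" "z \<in> Y" "p y = p z"
    have "E (p y) z" using pE[OF \<open>z \<in> Y\<close>] \<open>p y = p z\<close> by simp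
    thus "y = z" using pP[OF \<open>y \<in> Y\<close>, of z] \<open>z \<in> Y\<close> YX by blast
  qed
  have NP: "\<forall>A\<subseteq>Y. (\<forall>a\<in>A. \<forall>b\<in>A. \<not> E a b) \<longrightarrow> (\<exists>a\<in>Y-A. \<exists>b\<in>Y-A. E (p a) (p b))"
  proof (intro allI impI, rule ccontr)
    fix A assume AY: "A \<subseteq> Y" and indA: "\<forall>a\<in>A. \<forall>b\<in>A. \<not> E a b"
      and nex: "\<not> (\<exists>a\<in>Y-A. \<exists>b\<in>Y-A. E (p a) (p b))"
    define S where "S = I \<union> A \<union> p ` (Y - A)"
    have SV: "S \<subseteq> V" using IX AY YX XV pV unfolding S_def by blast
    have indS: "\<forall>x\<in>S. \<forall>y\<in>S. \<not> E x y"
    proof (intro ballI)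
      fix x y assume x: "x \<in> S" and y: "y \<in> S"
      have pn: "\<not> E (p b) w" if "b \<in> Y" "w \<in> X" "w \<noteq> b" for b w using pP that by blast
      have pn': "\<not> E w (p b)" if "b \<in> Y" "w \<in> X" "w \<noteq> b" for b w using pn[OF that] Es by blast
      have II: "\<not> E w z" if "w \<in> I" "z \<in> X" for w z using that unfolding I_def by auto
      have II': "\<not> E z w" if "w \<in> I" "z \<in> X" for w z using II[OF that] Es by blast
      have IY: "w \<noteq> b" if "w \<in> I" "b \<in> Y" for w b using that unfolding Y_def by auto
      have IAX: "I \<union> A \<subseteq> X" using IX AY YX by blast
      have nb: "w \<noteq> b" if "w \<in> I \<union> A" "b \<in> Y - A" for w b
      proof
        assume "w = b"
        thus False using that IY[of w b] by auto
      qed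
      have c1: "\<not> E u w" if "u \<in> I \<union> A" "w \<in> I \<union> A" for u w
      proof (cases "u \<in> I")
        case True thus ?thesis using II that IAX by blast
      next
        case F: False
        show ?thesis
        proof (cases "w \<in> I")
          case True thus ?thesis using II' that IAX by blast
        next
          case False thus ?thesis using F that indA by blast
        qed
      qed
      have xc: "x \<in> I \<union> A \<or> (\<exists>a\<in>Y - A. x = p a)" using x unfolding S_def by blast
      have yc: "y \<in> I \<union> A \<or> (\<exists>a\<in>Y - A. y = p a)" using y unfolding S_def by blast
      show "\<not> E x y" by (rule indS_aux[OF IAX c1 nb pn pn' nex xc yc])
    qed
    have "independent_set V E S" using SV indS unfolding independent_set_def by auto
    moreover have "finite (card ` {S. independent_set V E S})"
    proof (rule finite_imageI)
      have "{S. independent_set V E S} \<subseteq> Pow V" unfolding independent_set_def by blast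
      thus "finite {S. independent_set V E S}" using finV by (meson finite_Pow_iff finite_subset)
    qed
    ultimately have le: "card S \<le> alpha V E" unfolding alpha_def by (intro Max_ge) auto
    have finI: "finite I" using finX IX finite_subset by blast
    have finA: "finite A" using finY AY finite_subset by blast
    have d1: "I \<inter> A = {}" using AY unfolding Y_def by auto
    have d2: "(I \<union> A) \<inter> p ` (Y - A) = {}" using pnX IX AY YX by blast
    have c1: "card S = card (I \<union> A) + card (p ` (Y - A))"
      unfolding S_def by (rule card_Un_disjoint) (use d2 finI finA finY in auto)
    have c2: "card (I \<union> A) = card I + card A" by (rule card_Un_disjoint[OF finI finA d1])
    have c3: "card (p ` (Y - A)) = card (Y - A)"
      by (rule card_image, rule inj_on_subset[OF pinj]) blast
    have c4: "card (Y - A) = card Y - card A" by (rule card_Diff_subset[OF finA AY])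
    have c5: "card Y = card X - card I" unfolding Y_def by (rule card_Diff_subset[OF finI IX])
    have l1: "card A \<le> card Y" by (rule card_mono[OF finY AY])
    have l2: "card I \<le> card X" by (rule card_mono[OF finX IX])
    have "card S = card X" using c1 c2 c3 c4 c5 l1 l2 by arith
    thus False using le assms(4) by simp
  qed
  have YV: "Y \<subseteq> V" using YX XV by auto
  have pnX': "\<And>y w. y \<in> Y \<Longrightarrow> w \<in> X \<Longrightarrow> p y \<noteq> w" using pnX by blast
  have pne: "\<And>y z. y \<in> Y \<Longrightarrow> z \<in> Y \<Longrightarrow> y \<noteq> z \<Longrightarrow> p y \<noteq> p z" using pinj unfolding inj_on_def by blast
  have pn: "\<And>b w. b \<in> Y \<Longrightarrow> w \<in> X \<Longrightarrow> w \<noteq> b \<Longrightarrow> \<not> E (p b) w \<and> \<not> E w (p b)" using pP Es by blast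
  have one: "\<forall>a\<in>Y. \<forall>b\<in>Y. a \<noteq> b \<longrightarrow> E a b \<or> E (p a) (p b)"
  proof (intro ballI impI, rule ccontr)
    fix a b assume ab: "a \<in> Y" "b \<in> Y" "a \<noteq> b" "\<not> (E a b \<or> E (p a) (p b))"
    have X2: "a \<in> X" "b \<in> X" using ab YX by auto
    have "distinct [a, p a, b, p b]"
      using pnX'[OF ab(1) X2(1)] pnX'[OF ab(1) X2(2)] pnX'[OF ab(2) X2(1)] pnX'[OF ab(2) X2(2)]
        pne[OF ab(1-3)] ab(3) by simp
    moreover have "E a (p a)" "E b (p b)" using pE ab Es by blast+
    moreover have "\<not> E a b" "\<not> E (p a) (p b)" using ab by auto
    moreover have "\<not> E a (p b)" "\<not> E (p a) b" using pn[OF ab(2)] pn[OF ab(1)] ab YX by auto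
    moreover have "a \<in> V" "b \<in> V" "p a \<in> V" "p b \<in> V" using ab YV pV by auto
    ultimately show False by - (rule K[of a "p a" b "p b"]; assumption)
  qed
  have i: "\<forall>a\<in>Y. \<forall>b\<in>Y. \<forall>c\<in>Y. \<forall>d\<in>Y. distinct [a,b,c,d] \<longrightarrow> E a b \<longrightarrow> E (p c) (p d) \<longrightarrow> False"
  proof (intro ballI impI)
    fix a b c d assume Y4: "a \<in> Y" "b \<in> Y" "c \<in> Y" "d \<in> Y" and ds: "distinct [a,b,c,d]"
      and e: "E a b" "E (p c) (p d)"
    have X2: "a \<in> X" "b \<in> X" using Y4 YX by auto
    have "c \<noteq> d" using ds by auto
    hence "distinct [a, b, p c, p d]"
      using pnX'[OF Y4(3) X2(1)] pnX'[OF Y4(3) X2(2)] pnX'[OF Y4(4) X2(1)] pnX'[OF Y4(4) X2(2)]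
        pne[OF Y4(3,4)] ds by auto
    moreover have "\<not> E a (p c)" "\<not> E a (p d)" "\<not> E b (p c)" "\<not> E b (p d)"
      using pn[OF Y4(3) X2(1)] pn[OF Y4(4) X2(1)] pn[OF Y4(3) X2(2)] pn[OF Y4(4) X2(2)] ds by simp_all
    moreover have "a \<in> V" "b \<in> V" "p c \<in> V" "p d \<in> V" using Y4 YV pV by auto
    ultimately show False using e by - (rule K[of a b "p c" "p d"]; assumption)
  qed
  have ii: "\<forall>a\<in>Y. \<forall>b\<in>Y. \<forall>c\<in>Y. \<forall>d\<in>Y. distinct [a,b,c,d] \<longrightarrow> E (p a) (p b) \<longrightarrow> E (p c) (p d) \<longrightarrow>
          \<not> E (p a) (p c) \<longrightarrow> \<not> E (p a) (p d) \<longrightarrow> \<not> E (p b) (p c) \<longrightarrow> \<not> E (p b) (p d) \<longrightarrow> False"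
  proof (intro ballI impI)
    fix a b c d assume Y4: "a \<in> Y" "b \<in> Y" "c \<in> Y" "d \<in> Y" and ds: "distinct [a,b,c,d]"
      and e: "E (p a) (p b)" "E (p c) (p d)" "\<not> E (p a) (p c)" "\<not> E (p a) (p d)"
        "\<not> E (p b) (p c)" "\<not> E (p b) (p d)"
    have "distinct [p a, p b, p c, p d]" using ds pne[OF Y4(1,2)] pne[OF Y4(1,3)] pne[OF Y4(1,4)]
      pne[OF Y4(2,3)] pne[OF Y4(2,4)] pne[OF Y4(3,4)] by simp
    moreover have "p a \<in> V" "p b \<in> V" "p c \<in> V" "p d \<in> V" using Y4 pV by auto
    ultimately show False using e by - (rule K[of "p a" "p b" "p c" "p d"]; assumption)
  qed
  have iii: "\<forall>a\<in>Y. \<forall>b\<in>Y. \<forall>c\<in>Y. \<forall>d\<in>Y. distinct [a,b,c,d] \<longrightarrow> E a b \<longrightarrow> E c d \<longrightarrow>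
          \<not> E a c \<longrightarrow> \<not> E a d \<longrightarrow> \<not> E b c \<longrightarrow> \<not> E b d \<longrightarrow> False"
  proof (intro ballI impI)
    fix a b c d assume Y4: "a \<in> Y" "b \<in> Y" "c \<in> Y" "d \<in> Y" and ds: "distinct [a,b,c,d]"
      and e: "E a b" "E c d" "\<not> E a c" "\<not> E a d" "\<not> E b c" "\<not> E b d"
    have "a \<in> V" "b \<in> V" "c \<in> V" "d \<in> V" using Y4 YV by auto
    from K[OF this ds e] show False .
  qed
  have nb: "\<forall>a\<in>Y. \<exists>b\<in>Y. E a b"
  proof
    fix a assume a: "a \<in> Y"
    then obtain b where b: "b \<in> X" "E a b" unfolding Y_def I_def by auto
    hence "b \<notin> I" using a YX Es unfolding I_def by blast
    thus "\<exists>b\<in>Y. E a b" using b unfolding Y_def by auto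
  qed
  have cY: "card Y = 3 \<and> (\<forall>a\<in>Y. \<forall>b\<in>Y. a \<noteq> b \<longrightarrow> E a b)"
    by (rule comb[OF finY _ _ one i ii iii _ _ nb NP]) (use Ei Es in blast)+
  have tri: "triangle V E Y" using cY YV unfolding triangle_def by auto
  have "X = Y \<union> anti_nbhd V E Y"
  proof
    show "X \<subseteq> Y \<union> anti_nbhd V E Y"
    proof
      fix x assume x: "x \<in> X"
      show "x \<in> Y \<union> anti_nbhd V E Y"
      proof (cases "x \<in> Y")
        case False
        hence "x \<in> I" using x unfolding Y_def by auto
        thus ?thesis using x XV False YX unfolding I_def anti_nbhd_def by auto
      qed auto
    qed
  next
    show "Y \<union> anti_nbhd V E Y \<subseteq> X"
    proof
      fix v assume v: "v \<in> Y \<union> anti_nbhd V E Y"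
      show "v \<in> X"
      proof (rule ccontr)
        assume vX: "v \<notin> X"
        hence va: "v \<in> V" "\<forall>t\<in>Y. \<not> E v t" using v YX unfolding anti_nbhd_def by auto
        then obtain w where w: "w \<in> X" "E v w" using domX vX by auto
        hence wI: "w \<in> I" using va unfolding Y_def by auto
        have "card Y = 3" using cY by simp
        hence "Y \<noteq> {}" by auto
        then obtain y where y: "y \<in> Y" by auto
        then obtain y' where y': "y' \<in> Y" "E y y'" using nb by auto
        have "y \<noteq> y'" using y' Ei by auto
        moreover have "w \<notin> Y" using wI unfolding Y_def by auto
        ultimately have "distinct [v, w, y, y']" using vX w y y' YX by auto
        moreover have "\<not> E w y" "\<not> E w y'" using wI y y' YX unfolding I_def by auto
        moreover have "w \<in> V" "y \<in> V" "y' \<in> V" using w y y' YV XV by auto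
        moreover have "\<not> E v y" "\<not> E v y'" using va y y' by auto
        ultimately show False using va w y' by - (rule K[of v w y y']; assumption)
      qed
    qed
  qed
  thus ?thesis using tri YX by blast
qed

end
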